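(* Consider the stochastic bipartite matching model described in the context, under the stability condition, with stationary distribution $\pi$. Then \[ \sum_{(i,k)\in\mathcal{I}\times\mathcal{K}} \lambda_i\mu_k \sum_{\substack{\mathcal{A}\in\mathcal{J}:\ i\in\mathcal{I}(\mathcal{A}\cap\mathcal{K}),\\ k\in\mathcal{K}(\mathcal{A}\cap\mathcal{I})}} \pi(\mathcal{A}) \;=\; \sum_{\substack{(i,k)\in\mathcal{I}\times\mathcal{K}:\\ i\nsim k}} \lambda_i\mu_k \sum_{\substack{\mathcal{A}\in\mathcal{J}_0:\ i\notin\mathcal{I}(\mathcal{A}\cap\mathcal{K}),\\ k\notin\mathcal{K}(\mathcal{A}\cap\mathcal{I})}} \pi(\mathcal{A}). \]
   Context: Let $\mathcal{I}$ (customer classes) and $\mathcal{K}$ (server classes) be disjoint finite non-empty sets, and consider a connected bipartite graph (the compatibility graph) on $\mathcal{I}\cup\mathcal{K}$ whose edges all join an element of $\mathcal{I}$ to an element of $\mathcal{K}$; write $i\sim k$ if $i\in\mathcal{I}$ and $k\in\mathcal{K}$ are adjacent and $i\nsim k$ otherwise. For $i\in\mathcal{I}$ let $\mathcal{K}_i=\{k\in\mathcal{K}: i\sim k\}$ and for $k\in\mathcal{K}$ let $\mathcal{I}_k=\{i\in\mathcal{I}: i\sim k\}$. Let $\lambda_i>0$ ($i\in\mathcal{I}$) and $\mu_k>0$ ($k\in\mathcal{K}$) with $\sum_i\lambda_i=\sum_k\mu_k=1$. For $\mathcal{A}\subseteq\mathcal{I}$ write $\lambda(\mathcal{A})=\sum_{i\in\mathcal{A}}\lambda_i$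 and $\mathcal{K}(\mathcal{A})=\bigcup_{i\in\mathcal{A}}\mathcal{K}_i$; for $\mathcal{A}\subseteq\mathcal{K}$ write $\mu(\mathcal{A})=\sum_{k\in\mathcal{A}}\mu_k$ and $\mathcal{I}(\mathcal{A})=\bigcup_{k\in\mathcal{A}}\mathcal{I}_k$. Model: time is slotted; in each slot exactly one customer and one server arrive, the customer being of class $i$ with probability $\lambda_i$ and the server of class $k$ with probability $\mu_k$, independently within and across slots. Unmatched customers and unmatched servers wait in two queues in arrival order. Upon each arrival (first-come-first-matched policy): (1) the incoming customer is matched with the longest-waiting compatible unmatched server, if any; (2) the incoming server is matched with the longest-waiting compatible unmatched customer, if any; (3) if neither can be matched with a waiting item, they are matched with each other if compatible; (4) any incoming item still unmatched is appended to the back of its queue. Matched items leave immediately. The state is $(c,d)$ with $c=(c_1,\dots,c_n)$ the classes of unmatched customers and $d=(d_1,\dots,d_n)$ the classes of unmatched servers, in arrival order (the two lengths are always equal); the state space is $\Pi=\bigcup_{n\ge0}\{(c,d)\in\mathcal{I}^n\times\mathcal{K}^n: c_p\nsim d_q\ \forall p,q\}$, and $\varnothing$ denotes the empty state. Stability condition (assumed): $\lambda(\mathcal{A})<\mu(\mathcal{K}(\mathcal{A}))$ for every non-empty $\mathcal{A}\subsetneq\mathcal{I}$ (equivalently $\mu(\mathcal{A})<\lambda(\mathcal{I}(\mathcal{A}))$ for every non-empty $\mathcal{A}\subsetneq\mathcal{K}$). Then the Markov chain of states is ergodic with stationary distribution $\pi(c,d)=\pi(\varnothing)\prod_{p=1}^n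 \frac{\lambda_{c_p}}{\mu(\mathcal{K}(\{c_1,\dots,c_p\}))}\frac{\mu_{d_p}}{\lambda(\mathcal{I}(\{d_1,\dots,d_p\}))}$, $(c,d)\in\Pi$. Let $\mathcal{J}$ be the family of independent sets $\mathcal{A}\subseteq\mathcal{I}\cup\mathcal{K}$ of the compatibility graph such that $\mathcal{A}\cap\mathcal{I}$ and $\mathcal{A}\cap\mathcal{K}$ are both non-empty, and $\mathcal{J}_0=\mathcal{J}\cup\{\emptyset\}$. For $\mathcal{A}\in\mathcal{J}_0$, let $\Pi_{\mathcal{A}}$ be the set of $(c,d)\in\Pi$ with $\{c_1,\dots,c_n\}=\mathcal{A}\cap\mathcal{I}$ and $\{d_1,\dots,d_n\}=\mathcal{A}\cap\mathcal{K}$, and $\pi(\mathcal{A})=\sum_{(c,d)\in\Pi_{\mathcal{A}}}\pi(c,d)$ (for $\mathcal{A}=\emptyset$ this is $\pi(\varnothing)$). *)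

theory Defs
  imports "HOL-Analysis.Analysis"
begin

text \<open>Compatibility graph: customer classes I, server classes K (disjoint by typing),
  compatibility relation E (only its restriction to I x K matters).\<close>

definition Kof :: "('i \<Rightarrow> 'k \<Rightarrow> bool) \<Rightarrow> 'k set \<Rightarrow> 'i set \<Rightarrow> 'k set" where
  "Kof E K A = {k \<in> K. \<exists>i\<in>A. E i k}"

definition Iof :: "('i \<Rightarrow> 'k \<Rightarrow> bool) \<Rightarrow> 'i set \<Rightarrow> 'k set \<Rightarrow> 'i set" where
  "Iof E I B = {i \<in> I. \<exists>k\<in>B. E i k}"

definition adj :: "'i set \<Rightarrow> 'k set \<Rightarrow> ('i \<Rightarrow> 'k \<Rightarrow> bool) \<Rightarrow> 'i + 'k \<Rightarrow> 'i + 'k \<Rightarrow> bool" where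
  "adj I K E u v = (case (u, v) of
      (Inl i, Inr k) \<Rightarrow> i \<in> I \<and> k \<in> K \<and> E i k
    | (Inr k, Inl i) \<Rightarrow> i \<in> I \<and> k \<in> K \<and> E i k
    | _ \<Rightarrow> False)"

definition bip_connected :: "'i set \<Rightarrow> 'k set \<Rightarrow> ('i \<Rightarrow> 'k \<Rightarrow> bool) \<Rightarrow> bool" where
  "bip_connected I K E = (\<forall>u \<in> Inl ` I \<union> Inr ` K. \<forall>v \<in> Inl ` I \<union> Inr ` K. (adj I K E)\<^sup>*\<^sup>* u v)"

definition states :: "'i set \<Rightarrow> 'k set \<Rightarrow> ('i \<Rightarrow> 'k \<Rightarrow> bool) \<Rightarrow> ('i list \<times> 'k list) set" where
  "states I K E = {(c, d). length c = length d \<and> set c \<subseteq> I \<and> set d \<subseteq> K \<and>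
      (\<forall>x\<in>set c. \<forall>y\<in>set d. \<not> E x y)}"

text \<open>Unnormalised product-form weight (pi(c,d)/pi(empty)).\<close>
definition weight :: "'i set \<Rightarrow> 'k set \<Rightarrow> ('i \<Rightarrow> 'k \<Rightarrow> bool) \<Rightarrow> ('i \<Rightarrow> real) \<Rightarrow> ('k \<Rightarrow> real)
    \<Rightarrow> 'i list \<times> 'k list \<Rightarrow> real" where
  "weight I K E lam mu s = (case s of (c, d) \<Rightarrow>
     (\<Prod>p<length c. (lam (c ! p) / sum mu (Kof E K (set (take (Suc p) c))))
                   * (mu (d ! p) / sum lam (Iof E I (set (take (Suc p) d))))))"

definition pi_state :: "'i set \<Rightarrow> 'k set \<Rightarrow> ('i \<Rightarrow> 'k \<Rightarrow> bool) \<Rightarrow> ('i \<Rightarrow> real) \<Rightarrow> ('k \<Rightarrow> real)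
    \<Rightarrow> 'i list \<times> 'k list \<Rightarrow> real" where
  "pi_state I K E lam mu s = weight I K E lam mu s / infsum (weight I K E lam mu) (states I K E)"

text \<open>A set A of the family J_0 is represented as the pair (A \<inter> I, A \<inter> K).\<close>
definition pi_set :: "'i set \<Rightarrow> 'k set \<Rightarrow> ('i \<Rightarrow> 'k \<Rightarrow> bool) \<Rightarrow> ('i \<Rightarrow> real) \<Rightarrow> ('k \<Rightarrow> real)
    \<Rightarrow> 'i set \<times> 'k set \<Rightarrow> real" where
  "pi_set I K E lam mu A = infsum (pi_state I K E lam mu)
      {s \<in> states I K E. set (fst s) = fst A \<and> set (snd s) = snd A}"

definition indepJ :: "'i set \<Rightarrow> 'k set \<Rightarrow> ('i \<Rightarrow> 'k \<Rightarrow> bool) \<Rightarrow> ('i set \<times> 'k set) set" where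
  "indepJ I K E = {(A, B). A \<subseteq> I \<and> B \<subseteq> K \<and> A \<noteq> {} \<and> B \<noteq> {} \<and> (\<forall>i\<in>A. \<forall>k\<in>B. \<not> E i k)}"

definition indepJ0 :: "'i set \<Rightarrow> 'k set \<Rightarrow> ('i \<Rightarrow> 'k \<Rightarrow> bool) \<Rightarrow> ('i set \<times> 'k set) set" where
  "indepJ0 I K E = insert ({}, {}) (indepJ I K E)"

end

theory Submission
  imports Defs
begin

lemma my_has_sum_sum:
  fixes f :: "'a \<Rightarrow> 's \<Rightarrow> real"
  assumes "finite P" "\<And>x. x \<in> P \<Longrightarrow> (f x has_sum a x) A"
  shows "((\<lambda>s. \<Sum>x\<in>P. f x s) has_sum (\<Sum>x\<in>P. a x)) A"
  using assms
proof (induction P rule: finite_induct)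
  case empty
  then show ?case by simp
next
  case (insert x F)
  then show ?case by (simp add: has_sum_add)
qed

lemma gen_sum:
  fixes p :: "'s \<Rightarrow> real" and g :: "'x \<Rightarrow> real"
  assumes sp: "p summable_on St" and fP: "finite P"
   and fF: "\<And>x. x\<in>P \<Longrightarrow> finite (F x)"
   and U: "\<And>x. x\<in>P \<Longrightarrow> (\<Union>A\<in>F x. S A) = X x"
   and dj: "\<And>x A A'. x\<in>P \<Longrightarrow> A\<in>F x \<Longrightarrow> A'\<in>F x \<Longrightarrow> A\<noteq>A' \<Longrightarrow> S A \<inter> S A' = {}"
   and sub: "\<And>A x. x\<in>P \<Longrightarrow> A \<in> F x \<Longrightarrow> S A \<subseteq> St"
  shows "(\<Sum>x\<in>P. g x * (\<Sum>A\<in>F x. infsum p (S A))) = infsum (\<lambda>s. p s * (\<Sum>x\<in>{x\<in>P. s\<in>X x}. g x)) St"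
proof -
  have XS: "X x \<subseteq> St" if "x \<in> P" for x using U[OF that] sub[OF that] by blast
  have 1: "(\<Sum>A\<in>F x. infsum p (S A)) = infsum p (X x)" if "x \<in> P" for x
    using sum_infsum[of "F x" p S] fF[OF that] dj[OF that] sub[OF that] U[OF that]
      summable_on_subset_banach[OF sp] by metis
  have 2: "((\<lambda>s. if s \<in> X x then p s else 0) has_sum infsum p (X x)) St" if "x \<in> P" for x
  proof -
    have "(p has_sum infsum p (X x)) (X x)"
      using summable_on_subset_banach[OF sp XS[OF that]] by (simp add: has_sum_infsum)
    moreover have "(p has_sum infsum p (X x)) (X x) \<longleftrightarrow> ((\<lambda>s. if s \<in> X x then p s else 0) has_sum infsum p (X x)) St"
      by (rule has_sum_cong_neutral) (use XS[OF that] in auto)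
    ultimately show ?thesis by blast
  qed
  have 3: "((\<lambda>s. \<Sum>x\<in>P. g x * (if s \<in> X x then p s else 0)) has_sum (\<Sum>x\<in>P. g x * infsum p (X x))) St"
    by (rule my_has_sum_sum[OF fP]) (rule has_sum_cmult_right[OF 2])
  have 4: "(\<Sum>x\<in>P. g x * (if s \<in> X x then p s else 0)) = p s * (\<Sum>x\<in>{x\<in>P. s\<in>X x}. g x)" for s
    by (simp add: sum_distrib_left sum.inter_filter[OF fP, symmetric] if_distrib mult.commute cong: if_cong)
  have "(\<Sum>x\<in>P. g x * (\<Sum>A\<in>F x. infsum p (S A))) = (\<Sum>x\<in>P. g x * infsum p (X x))"
    using 1 by simp
  also have "\<dots> = infsum (\<lambda>s. p s * (\<Sum>x\<in>{x\<in>P. s\<in>X x}. g x)) St"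
    using 3 unfolding 4 by (simp add: infsumI)
  finally show ?thesis .
qed

lemma conn_i:
  assumes "bip_connected I K E" "i \<in> I" "K \<noteq> {}"
  shows "\<exists>k\<in>K. E i k"
proof -
  obtain k0 where "k0 \<in> K" using assms by blast
  then have "(adj I K E)\<^sup>*\<^sup>* (Inl i) (Inr k0)" using assms unfolding bip_connected_def by blast
  then show ?thesis
    by (cases rule: converse_rtranclpE) (auto simp: adj_def split: sum.splits)
qed

lemma conn_k:
  assumes "bip_connected I K E" "k \<in> K" "I \<noteq> {}"
  shows "\<exists>i\<in>I. E i k"
proof -
  obtain i0 where "i0 \<in> I" using assms by blast
  then have "(adj I K E)\<^sup>*\<^sup>* (Inr k) (Inl i0)" using assms unfolding bip_connected_def by blast
  then show ?thesis
    by (cases rule: converse_rtranclpE) (auto simp: adj_def split: sum.splits)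
qed

lemma weight_snoc:
  assumes "length c = length d"
  shows "weight I K E lam mu (c @ [i], d @ [k]) = weight I K E lam mu (c, d) *
     ((lam i / sum mu (Kof E K (insert i (set c)))) * (mu k / sum lam (Iof E I (insert k (set d)))))"
proof -
  have a: "(\<Prod>p<length c. (lam ((c@[i]) ! p) / sum mu (Kof E K (set (take (Suc p) (c@[i])))))
                   * (mu ((d@[k]) ! p) / sum lam (Iof E I (set (take (Suc p) (d@[k]))))))
     = (\<Prod>p<length c. (lam (c ! p) / sum mu (Kof E K (set (take (Suc p) c))))
                   * (mu (d ! p) / sum lam (Iof E I (set (take (Suc p) d)))))"
    by (rule prod.cong) (auto simp: nth_append assms)
  show ?thesis
    unfolding weight_def using a assms by (simp add: nth_append)
qed


lemma states_snoc:
  "((c @ [i], d @ [k]) \<in> states I K E) \<longleftrightarrow> (c, d) \<in> states I K E \<and> i \<in> I \<and> k \<in> K \<and> \<not> E i k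
     \<and> i \<notin> Iof E I (set d) \<and> k \<notin> Kof E K (set c)"
  unfolding states_def Iof_def Kof_def by auto

lemma stepM:
  fixes p :: "'i list \<times> 'k list \<Rightarrow> real"
  assumes sp: "p summable_on states I K E" and pnn: "\<And>s. s \<in> states I K E \<Longrightarrow> p s \<ge> 0"
  and psnoc: "\<And>c d i k. (c,d) \<in> states I K E \<Longrightarrow> (c@[i],d@[k]) \<in> states I K E \<Longrightarrow>
      p (c@[i],d@[k]) = p (c,d) * ((lam i / sum mu (Kof E K (insert i (set c)))) * (mu k / sum lam (Iof E I (insert k (set d)))))"
  and posK: "\<And>A. A \<subseteq> I \<Longrightarrow> A \<noteq> {} \<Longrightarrow> sum mu (Kof E K A) > 0"
  and posI: "\<And>B. B \<subseteq> K \<Longrightarrow> B \<noteq> {} \<Longrightarrow> sum lam (Iof E I B) > 0"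
  and fI: "finite I" and fK: "finite K"
  and lnn: "\<And>i. i \<in> I \<Longrightarrow> lam i \<ge> 0" and mnn: "\<And>k. k \<in> K \<Longrightarrow> mu k \<ge> 0"
  shows "infsum (\<lambda>s. p s * (\<Sum>(i,k)\<in>{(i,k)\<in>I\<times>K. i \<in> Iof E I (set (snd s)) \<and> k \<in> Kof E K (set (fst s))}. lam i * mu k)) (states I K E)
       = infsum (\<lambda>s. p s * (\<Sum>(i,k)\<in>{(i,k)\<in>I\<times>K. \<not> E i k \<and> i \<notin> Iof E I (set (snd s)) \<and> k \<notin> Kof E K (set (fst s))}. lam i * mu k)) (states I K E)"
proof -
  let ?St = "states I K E"
  define D where "D s = (\<Sum>(i,k)\<in>{(i,k)\<in>I\<times>K. i \<in> Iof E I (set (snd s)) \<and> k \<in> Kof E K (set (fst s))}. lam i * mu k)" for s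
  define Pk where "Pk s = {(i,k)\<in>I\<times>K. \<not> E i k \<and> i \<notin> Iof E I (set (snd s)) \<and> k \<notin> Kof E K (set (fst s))}" for s :: "'i list \<times> 'k list"
  define C where "C = (\<Sum>(i,k)\<in>I\<times>K. lam i * mu k)"
  define e where "e = ([] :: 'i list, [] :: 'k list)"
  have fIK: "finite (I \<times> K)" using fI fK by simp
  have D0: "D e = 0" unfolding D_def e_def Iof_def by simp
  have DC: "D s \<le> C" for s
    unfolding D_def C_def
    by (rule sum_mono2[OF fIK]) (auto intro!: mult_nonneg_nonneg lnn mnn)
  have Dnn: "D s \<ge> 0" for s
    unfolding D_def by (rule sum_nonneg) (auto intro!: mult_nonneg_nonneg lnn mnn)
  have spD: "(\<lambda>s. p s * D s) summable_on ?St"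
  proof (rule summable_on_comparison_test)
    show "(\<lambda>s. p s * C) summable_on ?St" by (rule summable_on_cmult_left[OF sp])
  qed (auto intro!: mult_left_mono DC pnn Dnn mult_nonneg_nonneg)
  have Z0: "infsum (\<lambda>s. p s * D s) ?St = infsum (\<lambda>s. p s * D s) (?St - {e})"
    by (rule infsum_cong_neutral) (use D0 in auto)
  define T where "T = Sigma ?St Pk"
  define gm where "gm = (\<lambda>(s::'i list \<times> 'k list, (i::'i, k::'k)). (fst s @ [i], snd s @ [k]))"
  define gi where "gi = (\<lambda>(c::'i list, d::'k list). ((butlast c, butlast d), (last c, last d)))"
  have bij: "bij_betw gm T (?St - {e})"
  proof (rule bij_betwI[where g = gi])
    show "gm \<in> T \<rightarrow> ?St - {e}"
      unfolding T_def gm_def Pk_def e_def by (auto simp: states_snoc)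
    show "gi \<in> ?St - {e} \<rightarrow> T"
    proof
      fix y assume y: "y \<in> ?St - {e}"
      obtain c d where yc: "y = (c, d)" by (cases y)
      have len: "length c = length d" using y yc unfolding states_def by auto
      have "c \<noteq> []" using y yc len unfolding e_def by auto
      moreover then have "d \<noteq> []" using len by auto
      ultimately have eq: "y = (butlast c @ [last c], butlast d @ [last d])" using yc by simp
      have "(butlast c @ [last c], butlast d @ [last d]) \<in> ?St" using y eq by simp
      then show "gi y \<in> T" unfolding states_snoc T_def Pk_def gi_def yc by simp
    qed
    show "gi (gm x) = x" if "x \<in> T" for x
      unfolding gi_def gm_def by (cases x) auto
    show "gm (gi y) = y" if "y \<in> ?St - {e}" for y
    proof -
      obtain c d where yc: "y = (c, d)" by (cases y)
      have len: "length c = length d" using that yc unfolding states_def by auto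
      have "c \<noteq> []" using that yc len unfolding e_def by auto
      moreover then have "d \<noteq> []" using len by auto
      ultimately show ?thesis using yc unfolding gi_def gm_def by simp
    qed
  qed
  have key: "p (gm x) * D (gm x) = (case x of (s, (i, k)) \<Rightarrow> p s * (lam i * mu k))" if "x \<in> T" for x
  proof -
    obtain c d i k where x: "x = ((c, d), (i, k))" by (metis prod.collapse)
    have cd: "(c, d) \<in> ?St" and ik: "(i, k) \<in> Pk (c, d)" using that x unfolding T_def by auto
    have sn: "(c@[i], d@[k]) \<in> ?St" using cd ik unfolding Pk_def by (auto simp: states_snoc)
    have sub1: "Iof E I (insert k (set d)) \<subseteq> I" and sub2: "Kof E K (insert i (set c)) \<subseteq> K"
      unfolding Iof_def Kof_def by auto
    have dset: "{(i', k')\<in>I\<times>K. i' \<in> Iof E I (set (d @ [k])) \<and> k' \<in> Kof E K (set (c @ [i]))}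
        = Iof E I (insert k (set d)) \<times> Kof E K (insert i (set c))"
      using sub1 sub2 by auto
    have Dv: "D (c@[i], d@[k]) = sum lam (Iof E I (insert k (set d))) * sum mu (Kof E K (insert i (set c)))"
      unfolding D_def fst_conv snd_conv dset by (simp add: sum_product sum.cartesian_product)
    have p1: "sum mu (Kof E K (insert i (set c))) > 0"
      using cd ik unfolding states_def Pk_def by (intro posK) auto
    have p2: "sum lam (Iof E I (insert k (set d))) > 0"
      using cd ik unfolding states_def Pk_def by (intro posI) auto
    show ?thesis
      unfolding x gm_def using psnoc[OF cd sn] Dv p1 p2 by simp
  qed
  have "infsum (\<lambda>s. p s * D s) (?St - {e}) = infsum (\<lambda>x. p (gm x) * D (gm x)) T"
    by (rule infsum_reindex_bij_betw[OF bij, symmetric])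
  also have "\<dots> = infsum (\<lambda>(s, (i, k)). p s * (lam i * mu k)) T"
    by (rule infsum_cong) (use key in auto)
  also have "\<dots> = infsum (\<lambda>s. infsum (\<lambda>(i, k). p s * (lam i * mu k)) (Pk s)) ?St"
  proof -
    have s1: "(\<lambda>x. p (gm x) * D (gm x)) summable_on T"
      using summable_on_reindex_bij_betw[OF bij, of "\<lambda>s. p s * D s"]
        summable_on_subset_banach[OF spD, of "?St - {e}"] by auto
    have s2: "(\<lambda>(s, (i, k)). p s * (lam i * mu k)) summable_on T"
      using summable_on_cong[of T "\<lambda>x. p (gm x) * D (gm x)" "\<lambda>(s, (i, k)). p s * (lam i * mu k)"] key s1
      by auto
    have "(\<lambda>(s, ik). (\<lambda>(i, k). p s * (lam i * mu k)) ik) summable_on (Sigma ?St Pk)"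
      using s2 unfolding T_def by (simp add: case_prod_unfold)
    from infsum_Sigma'_banach[OF this] show ?thesis
      unfolding T_def by (simp add: case_prod_unfold)
  qed
  also have "\<dots> = infsum (\<lambda>s. p s * (\<Sum>(i,k)\<in>Pk s. lam i * mu k)) ?St"
  proof (rule infsum_cong)
    fix s assume "s \<in> ?St"
    have "finite (Pk s)" unfolding Pk_def by (rule finite_subset[OF _ fIK]) auto
    then show "infsum (\<lambda>(i, k). p s * (lam i * mu k)) (Pk s) = p s * (\<Sum>(i,k)\<in>Pk s. lam i * mu k)"
      by (simp add: sum_distrib_left case_prod_unfold)
  qed
  finally show ?thesis using Z0 unfolding D_def Pk_def by simp
qed


theorem corollary1:
  fixes I :: "'i set" and K :: "'k set" and E :: "'i \<Rightarrow> 'k \<Rightarrow> bool"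
    and lam :: "'i \<Rightarrow> real" and mu :: "'k \<Rightarrow> real"
  assumes "finite I" and "finite K" and "I \<noteq> {}" and "K \<noteq> {}"
    and "bip_connected I K E"
    and "\<forall>i\<in>I. lam i > 0" and "\<forall>k\<in>K. mu k > 0"
    and "sum lam I = 1" and "sum mu K = 1"
    and "\<forall>A. A \<subseteq> I \<and> A \<noteq> {} \<and> A \<noteq> I \<longrightarrow> sum lam A < sum mu (Kof E K A)"
  shows "(\<Sum>(i, k)\<in>I \<times> K. lam i * mu k *
            (\<Sum>A\<in>{A \<in> indepJ I K E. i \<in> Iof E I (snd A) \<and> k \<in> Kof E K (fst A)}.
               pi_set I K E lam mu A))
       = (\<Sum>(i, k)\<in>{(i, k) \<in> I \<times> K. \<not> E i k}. lam i * mu k *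
            (\<Sum>A\<in>{A \<in> indepJ0 I K E. i \<notin> Iof E I (snd A) \<and> k \<notin> Kof E K (fst A)}.
               pi_set I K E lam mu A))"
proof -
  note fI = assms(1) and fK = assms(2)
  let ?St = "states I K E"
  let ?w = "weight I K E lam mu"
  let ?Z = "infsum ?w ?St"
  define p where "p = pi_state I K E lam mu"
  define S where "S A = {s \<in> ?St. set (fst s) = fst A \<and> set (snd s) = snd A}" for A
  have lnn: "\<And>i. i \<in> I \<Longrightarrow> lam i \<ge> 0" and mnn: "\<And>k. k \<in> K \<Longrightarrow> mu k \<ge> 0"
    using assms(6,7) by auto
  show ?thesis
  proof (cases "?w summable_on ?St")
    case False
    then have "?Z = 0" by (rule infsum_not_exists)
    then have "pi_state I K E lam mu = (\<lambda>_. 0)" by (intro ext) (simp add: pi_state_def)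
    then show ?thesis by (simp add: pi_set_def)
  next
    case True
    have wnn: "?w s \<ge> 0" if "s \<in> ?St" for s
    proof -
      obtain c d where s: "s = (c, d)" by (cases s)
      have cI: "set c \<subseteq> I" and dK: "set d \<subseteq> K" and len: "length c = length d"
        using that s unfolding states_def by auto
      have "0 \<le> lam (c ! q)" "0 \<le> mu (d ! q)" if "q < length c" for q
        using that cI dK len by (auto intro!: lnn mnn nth_mem)
      moreover have "0 \<le> sum mu (Kof E K X)" for X
        by (rule sum_nonneg) (auto simp: Kof_def intro: mnn)
      moreover have "0 \<le> sum lam (Iof E I X)" for X
        by (rule sum_nonneg) (auto simp: Iof_def intro: lnn)
      ultimately show ?thesis
        unfolding s weight_def by (auto intro!: prod_nonneg mult_nonneg_nonneg divide_nonneg_nonneg)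
    qed
    have Znn: "?Z \<ge> 0" by (rule infsum_nonneg) (use wnn in auto)
    have sp: "p summable_on ?St"
      unfolding p_def pi_state_def divide_inverse by (rule summable_on_cmult_left[OF True])
    have pnn: "p s \<ge> 0" if "s \<in> ?St" for s
      unfolding p_def pi_state_def using wnn[OF that] Znn by simp
    have psnoc: "p (c@[i],d@[k]) = p (c,d) * ((lam i / sum mu (Kof E K (insert i (set c)))) * (mu k / sum lam (Iof E I (insert k (set d)))))"
      if "(c,d) \<in> ?St" for c d i k
    proof -
      have "length c = length d" using that unfolding states_def by auto
      then show ?thesis unfolding p_def pi_state_def by (simp add: weight_snoc)
    qed
    have posK: "sum mu (Kof E K A) > 0" if AI: "A \<subseteq> I" "A \<noteq> {}" for A
    proof -
      obtain i where i: "i \<in> A" using AI by blast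
      obtain k where k: "k \<in> K" "E i k" using conn_i[OF assms(5) _ assms(4)] i AI by blast
      have "k \<in> Kof E K A" using i k unfolding Kof_def by auto
      moreover have "finite (Kof E K A)" using fK unfolding Kof_def by auto
      ultimately have "mu k \<le> sum mu (Kof E K A)"
        by (intro member_le_sum) (auto simp: Kof_def intro: mnn)
      then show ?thesis using assms(7) k by force
    qed
    have posI: "sum lam (Iof E I B) > 0" if BK: "B \<subseteq> K" "B \<noteq> {}" for B
    proof -
      obtain k where k: "k \<in> B" using BK by blast
      obtain i where i: "i \<in> I" "E i k" using conn_k[OF assms(5) _ assms(3)] k BK by blast
      have "i \<in> Iof E I B" using i k unfolding Iof_def by auto
      moreover have "finite (Iof E I B)" using fI unfolding Iof_def by auto
      ultimately have "lam i \<le> sum lam (Iof E I B)"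
        by (intro member_le_sum) (auto simp: Iof_def intro: lnn)
      then show ?thesis using assms(6) i by force
    qed
    have M: "infsum (\<lambda>s. p s * (\<Sum>(i,k)\<in>{(i,k)\<in>I\<times>K. i \<in> Iof E I (set (snd s)) \<and> k \<in> Kof E K (set (fst s))}. lam i * mu k)) ?St
       = infsum (\<lambda>s. p s * (\<Sum>(i,k)\<in>{(i,k)\<in>I\<times>K. \<not> E i k \<and> i \<notin> Iof E I (set (snd s)) \<and> k \<notin> Kof E K (set (fst s))}. lam i * mu k)) ?St"
      by (rule stepM[OF sp pnn psnoc posK posI fI fK lnn mnn])
    have finJ: "finite {A \<in> indepJ0 I K E. Q A}" for Q
      by (rule finite_subset[where B = "Pow I \<times> Pow K"]) (use fI fK in \<open>auto simp: indepJ0_def indepJ_def\<close>)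
    have finJ': "finite {A \<in> indepJ I K E. Q A}" for Q
      by (rule finite_subset[OF _ finJ[of Q]]) (auto simp: indepJ0_def)
    have UD: "(\<Union>A\<in>{A \<in> indepJ I K E. i \<in> Iof E I (snd A) \<and> k \<in> Kof E K (fst A)}. S A)
       = {s \<in> ?St. i \<in> Iof E I (set (snd s)) \<and> k \<in> Kof E K (set (fst s))}" for i k
    proof
      show "(\<Union>A\<in>{A \<in> indepJ I K E. i \<in> Iof E I (snd A) \<and> k \<in> Kof E K (fst A)}. S A)
         \<subseteq> {s \<in> ?St. i \<in> Iof E I (set (snd s)) \<and> k \<in> Kof E K (set (fst s))}"
        unfolding S_def by auto
      show "{s \<in> ?St. i \<in> Iof E I (set (snd s)) \<and> k \<in> Kof E K (set (fst s))}
         \<subseteq> (\<Union>A\<in>{A \<in> indepJ I K E. i \<in> Iof E I (snd A) \<and> k \<in> Kof E K (fst A)}. S A)"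
      proof
        fix s assume s: "s \<in> {s \<in> ?St. i \<in> Iof E I (set (snd s)) \<and> k \<in> Kof E K (set (fst s))}"
        then have "(set (fst s), set (snd s)) \<in> indepJ I K E"
          unfolding indepJ_def states_def Iof_def Kof_def by auto
        then show "s \<in> (\<Union>A\<in>{A \<in> indepJ I K E. i \<in> Iof E I (snd A) \<and> k \<in> Kof E K (fst A)}. S A)"
          using s unfolding S_def by (intro UN_I[of "(set (fst s), set (snd s))"]) auto
      qed
    qed
    have UU: "(\<Union>A\<in>{A \<in> indepJ0 I K E. i \<notin> Iof E I (snd A) \<and> k \<notin> Kof E K (fst A)}. S A)
       = {s \<in> ?St. i \<notin> Iof E I (set (snd s)) \<and> k \<notin> Kof E K (set (fst s))}" for i k
    proof
      show "(\<Union>A\<in>{A \<in> indepJ0 I K E. i \<notin> Iof E I (snd A) \<and> k \<notin> Kof E K (fst A)}. S A)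
         \<subseteq> {s \<in> ?St. i \<notin> Iof E I (set (snd s)) \<and> k \<notin> Kof E K (set (fst s))}"
        unfolding S_def by auto
      show "{s \<in> ?St. i \<notin> Iof E I (set (snd s)) \<and> k \<notin> Kof E K (set (fst s))}
         \<subseteq> (\<Union>A\<in>{A \<in> indepJ0 I K E. i \<notin> Iof E I (snd A) \<and> k \<notin> Kof E K (fst A)}. S A)"
      proof
        fix s assume s: "s \<in> {s \<in> ?St. i \<notin> Iof E I (set (snd s)) \<and> k \<notin> Kof E K (set (fst s))}"
        have "(set (fst s), set (snd s)) \<in> indepJ0 I K E"
        proof (cases "fst s = []")
          case True
          then have "snd s = []" using s unfolding states_def by (auto simp: case_prod_unfold)
          then show ?thesis using True unfolding indepJ0_def by simp
        next
          case False
          then have "snd s \<noteq> []" using s unfolding states_def by (auto simp: case_prod_unfold)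
          then show ?thesis using False s unfolding indepJ0_def indepJ_def states_def by auto
        qed
        then show "s \<in> (\<Union>A\<in>{A \<in> indepJ0 I K E. i \<notin> Iof E I (snd A) \<and> k \<notin> Kof E K (fst A)}. S A)"
          using s unfolding S_def by (intro UN_I[of "(set (fst s), set (snd s))"]) auto
      qed
    qed
    have L0: "(\<Sum>x\<in>I \<times> K. (case x of (i,k) \<Rightarrow> lam i * mu k) *
          (\<Sum>A\<in>(case x of (i,k) \<Rightarrow> {A \<in> indepJ I K E. i \<in> Iof E I (snd A) \<and> k \<in> Kof E K (fst A)}). infsum p (S A)))
       = infsum (\<lambda>s. p s * (\<Sum>x\<in>{x\<in>I \<times> K. s \<in> (case x of (i,k) \<Rightarrow> {s \<in> ?St. i \<in> Iof E I (set (snd s)) \<and> k \<in> Kof E K (set (fst s))})}.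
                  (case x of (i,k) \<Rightarrow> lam i * mu k))) ?St"
      apply (rule gen_sum[OF sp])
      using fI fK finJ' UD by (auto simp: S_def split: prod.splits)
    have R0: "(\<Sum>x\<in>{(i, k) \<in> I \<times> K. \<not> E i k}. (case x of (i,k) \<Rightarrow> lam i * mu k) *
          (\<Sum>A\<in>(case x of (i,k) \<Rightarrow> {A \<in> indepJ0 I K E. i \<notin> Iof E I (snd A) \<and> k \<notin> Kof E K (fst A)}). infsum p (S A)))
       = infsum (\<lambda>s. p s * (\<Sum>x\<in>{x\<in>{(i, k) \<in> I \<times> K. \<not> E i k}. s \<in> (case x of (i,k) \<Rightarrow> {s \<in> ?St. i \<notin> Iof E I (set (snd s)) \<and> k \<notin> Kof E K (set (fst s))})}.
                  (case x of (i,k) \<Rightarrow> lam i * mu k))) ?St"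
      apply (rule gen_sum[OF sp])
      using fI fK finJ UU finite_subset[of "{(i, k) \<in> I \<times> K. \<not> E i k}" "I \<times> K"]
      by (auto simp: S_def split: prod.splits)
    have L1: "infsum (\<lambda>s. p s * (\<Sum>x\<in>{x\<in>I \<times> K. s \<in> (case x of (i,k) \<Rightarrow> {s \<in> ?St. i \<in> Iof E I (set (snd s)) \<and> k \<in> Kof E K (set (fst s))})}.
                  (case x of (i,k) \<Rightarrow> lam i * mu k))) ?St
       = infsum (\<lambda>s. p s * (\<Sum>(i,k)\<in>{(i,k)\<in>I\<times>K. i \<in> Iof E I (set (snd s)) \<and> k \<in> Kof E K (set (fst s))}. lam i * mu k)) ?St"
    proof (rule infsum_cong)
      fix s assume "s \<in> ?St"
      then have "{x\<in>I \<times> K. s \<in> (case x of (i,k) \<Rightarrow> {s \<in> ?St. i \<in> Iof E I (set (snd s)) \<and> k \<in> Kof E K (set (fst s))})}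
          = {(i,k)\<in>I\<times>K. i \<in> Iof E I (set (snd s)) \<and> k \<in> Kof E K (set (fst s))}" by auto
      then show "p s * (\<Sum>x\<in>{x\<in>I \<times> K. s \<in> (case x of (i,k) \<Rightarrow> {s \<in> ?St. i \<in> Iof E I (set (snd s)) \<and> k \<in> Kof E K (set (fst s))})}.
                  (case x of (i,k) \<Rightarrow> lam i * mu k))
         = p s * (\<Sum>(i,k)\<in>{(i,k)\<in>I\<times>K. i \<in> Iof E I (set (snd s)) \<and> k \<in> Kof E K (set (fst s))}. lam i * mu k)"
        by simp
    qed
    have R1: "infsum (\<lambda>s. p s * (\<Sum>x\<in>{x\<in>{(i, k) \<in> I \<times> K. \<not> E i k}. s \<in> (case x of (i,k) \<Rightarrow> {s \<in> ?St. i \<notin> Iof E I (set (snd s)) \<and> k \<notin> Kof E K (set (fst s))})}.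
                  (case x of (i,k) \<Rightarrow> lam i * mu k))) ?St
       = infsum (\<lambda>s. p s * (\<Sum>(i,k)\<in>{(i,k)\<in>I\<times>K. \<not> E i k \<and> i \<notin> Iof E I (set (snd s)) \<and> k \<notin> Kof E K (set (fst s))}. lam i * mu k)) ?St"
    proof (rule infsum_cong)
      fix s assume "s \<in> ?St"
      then have "{x\<in>{(i, k) \<in> I \<times> K. \<not> E i k}. s \<in> (case x of (i,k) \<Rightarrow> {s \<in> ?St. i \<notin> Iof E I (set (snd s)) \<and> k \<notin> Kof E K (set (fst s))})}
          = {(i,k)\<in>I\<times>K. \<not> E i k \<and> i \<notin> Iof E I (set (snd s)) \<and> k \<notin> Kof E K (set (fst s))}" by auto
      then show "p s * (\<Sum>x\<in>{x\<in>{(i, k) \<in> I \<times> K. \<not> E i k}. s \<in> (case x of (i,k) \<Rightarrow> {s \<in> ?St. i \<notin> Iof E I (set (snd s)) \<and> k \<notin> Kof E K (set (fst s))})}.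
                  (case x of (i,k) \<Rightarrow> lam i * mu k))
         = p s * (\<Sum>(i,k)\<in>{(i,k)\<in>I\<times>K. \<not> E i k \<and> i \<notin> Iof E I (set (snd s)) \<and> k \<notin> Kof E K (set (fst s))}. lam i * mu k)"
        by simp
    qed
    have LL: "(\<Sum>(i, k)\<in>I \<times> K. lam i * mu k *
            (\<Sum>A\<in>{A \<in> indepJ I K E. i \<in> Iof E I (snd A) \<and> k \<in> Kof E K (fst A)}.
               pi_set I K E lam mu A))
       = (\<Sum>x\<in>I \<times> K. (case x of (i,k) \<Rightarrow> lam i * mu k) *
          (\<Sum>A\<in>(case x of (i,k) \<Rightarrow> {A \<in> indepJ I K E. i \<in> Iof E I (snd A) \<and> k \<in> Kof E K (fst A)}). infsum p (S A)))"
      by (rule sum.cong) (auto simp: pi_set_def p_def S_def)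
    have RR: "(\<Sum>(i, k)\<in>{(i, k) \<in> I \<times> K. \<not> E i k}. lam i * mu k *
            (\<Sum>A\<in>{A \<in> indepJ0 I K E. i \<notin> Iof E I (snd A) \<and> k \<notin> Kof E K (fst A)}.
               pi_set I K E lam mu A))
       = (\<Sum>x\<in>{(i, k) \<in> I \<times> K. \<not> E i k}. (case x of (i,k) \<Rightarrow> lam i * mu k) *
          (\<Sum>A\<in>(case x of (i,k) \<Rightarrow> {A \<in> indepJ0 I K E. i \<notin> Iof E I (snd A) \<and> k \<notin> Kof E K (fst A)}). infsum p (S A)))"
      by (rule sum.cong) (auto simp: pi_set_def p_def S_def)
    show ?thesis using LL L0 L1 M R1 R0 RR by simp
  qed
qed

end
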